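(* Under the first-order dynamical system $$\dot{x}^{(1)}_k=2\lambda(x_{k-1}+s^{*}_{k-1})x^{(1)}_{k-1}-2\lambda(x_k+s^{*}_k)x^{(1)}_k-x^{(1)}_k+x^{(1)}_{k+1},\qquad 1\le k\le b,$$ with $x^{(1)}_0=x^{(1)}_{b+1}\equiv 0$ and initial condition $x^{(1)}(0)=N(z-y)$, we have for all $t\ge 0$ $$|x^{(1)}(t)|\le |x^{(1)}(0)|=1.$$
   Context: Setting: a system of $N$ servers, each with buffer size $b=O(\log N)$, Poisson arrivals of rate $\lambda N$ with $\lambda=1-\gamma/N^{\alpha}$ ($0<\gamma\le 1$, $\alpha>0$), i.i.d. exponential service times of rate one, and the power-of-two-choices dispatching rule. $s_k$ is the fraction of servers with at least $k$ jobs ($s_0=1$, $s_{b+1}=0$), and $s^{*}=(s^*_1,\dots,s^*_b)$ is the unique equilibrium of the mean-field model $\dot s_k=\lambda(s_{k-1}^2-s_k^2)-(s_k-s_{k+1})$ for $1\le k\le b-1$, $\dot s_b=\lambda(s_{b-1}^2-s_b^2)-s_b$. Let $x=s-s^{*}$ and let $x(t)$ denote the trajectory of the centered mean-field dynamics $\dot x=f(x)$ (the mean-field model written in the variable $x=s-s^*$), so that $s_k(t)=x_k(t)+s^*_k\ge 0$ for all $t\ge 0$ and all $k$. The system for $x^{(1)}$ in the claim is the linearization (first-order/variational system) of these dynamics along the trajectory $x(t)$. Here $z,y$ are states such that the transition rate from $z$ to $y$ is nonzero, so $z-y$ has exactly one nonzero entry equal to $\pm 1/N$, hence $x^{(1)}(0)=N(z-y)$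 has a single entry $\pm1$. Throughout, $|v|=\sum_{k=1}^b|v_k|$ denotes the 1-norm. *)

theory Defs
  imports "HOL-Analysis.Analysis"
begin

definition ext_s :: "nat \<Rightarrow> (nat \<Rightarrow> real) \<Rightarrow> nat \<Rightarrow> real" where
  "ext_s b v k = (if k = 0 then 1 else if k \<le> b then v k else 0)"

definition ext0 :: "nat \<Rightarrow> (nat \<Rightarrow> real) \<Rightarrow> nat \<Rightarrow> real" where
  "ext0 b v k = (if 1 \<le> k \<and> k \<le> b then v k else 0)"

definition mf_rhs :: "real \<Rightarrow> nat \<Rightarrow> (nat \<Rightarrow> real) \<Rightarrow> nat \<Rightarrow> real" where
  "mf_rhs lam b s k =
     lam * ((ext_s b s (k - 1))\<^sup>2 - (ext_s b s k)\<^sup>2) - (ext_s b s k - ext_s b s (k + 1))"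

end

theory Submission
  imports Defs
begin

lemma pt_abs:
  fixes a c d e s t :: real
  assumes "t < s" "\<bar>(a - c)/(s-t) - d\<bar> < e" "c \<noteq> 0 \<Longrightarrow> \<bar>a - c\<bar> < \<bar>c\<bar>"
  shows "\<bar>a\<bar> - \<bar>c\<bar> \<le> (if c \<noteq> 0 then sgn c else sgn d) * d * (s - t) + e * (s - t)"
proof -
  have h: "s - t > 0" using assms by simp
  have "\<bar>(a - c) - d * (s-t)\<bar> = \<bar>(a - c)/(s-t) - d\<bar> * (s - t)"
    using h by (simp add: field_simps abs_mult)
  also have "\<dots> \<le> e * (s - t)" using assms(2) h by (simp add: mult_right_mono)
  finally have k: "\<bar>(a - c) - d * (s-t)\<bar> \<le> e * (s - t)" .
  show ?thesis
  proof (cases "c = 0")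
    case True
    have "\<bar>a\<bar> \<le> \<bar>a - d * (s-t)\<bar> + \<bar>d * (s - t)\<bar>" by linarith
    also have "\<dots> \<le> e * (s - t) + \<bar>d\<bar> * (s - t)" using k h True by (simp add: abs_mult)
    finally have "\<bar>a\<bar> \<le> e * (s - t) + \<bar>d\<bar> * (s - t)" .
    moreover have "sgn d * d = \<bar>d\<bar>" by (simp add: sgn_mult_self_eq abs_sgn)
    ultimately show ?thesis using True by simp
  next
    case False
    then have "\<bar>a - c\<bar> < \<bar>c\<bar>" using assms(3) by simp
    then show ?thesis using k h False
      by (cases "c > 0"; auto simp: abs_if split: if_splits)
  qed
qed

lemma local_abs:
  fixes u :: "real \<Rightarrow> real"
  assumes D: "(u has_real_derivative d) (at t within {0..})" and t: "0 \<le> t" and e: "e > 0"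
  shows "eventually (\<lambda>s. \<bar>u s\<bar> - \<bar>u t\<bar> \<le> (if u t \<noteq> 0 then sgn (u t) else sgn d) * d * (s - t) + e * (s - t)) (at_right t)"
proof -
  have le: "at_right t \<le> at t within {0..}" by (rule at_le) (use t in auto)
  have q: "((\<lambda>s. (u s - u t)/(s - t)) \<longlongrightarrow> d) (at_right t)"
    using D le by (simp add: has_field_derivative_iff tendsto_mono)
  have E1: "eventually (\<lambda>s. \<bar>(u s - u t)/(s - t) - d\<bar> < e) (at_right t)"
    using tendstoD[OF q e] by (simp add: dist_real_def)
  have c: "(u \<longlongrightarrow> u t) (at_right t)"
    using DERIV_continuous[OF D] le by (simp add: continuous_within tendsto_mono)
  have E3: "eventually (\<lambda>s. u t \<noteq> 0 \<longrightarrow> \<bar>u s - u t\<bar> < \<bar>u t\<bar>) (at_right t)"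
  proof (cases "u t = 0")
    case True then show ?thesis by simp
  next
    case False
    then have "\<bar>u t\<bar> > 0" by simp
    from tendstoD[OF c this] show ?thesis
      by (rule eventually_mono) (simp add: dist_real_def)
  qed
  show ?thesis
    using eventually_conj[OF eventually_at_right_less[of t] eventually_conj[OF E1 E3]]
    by (rule eventually_mono) (intro pt_abs; auto)
qed

lemma mono_right:
  fixes g :: "real \<Rightarrow> real"
  assumes cont: "continuous_on {0..T} g" and T: "0 \<le> T"
    and loc: "\<And>t. 0 \<le> t \<Longrightarrow> t < T \<Longrightarrow> eventually (\<lambda>s. g s \<le> g t) (at_right t)"
  shows "g T \<le> g 0"
proof -
  define K where "K = {0..T} \<inter> g -` {..g 0}"
  have cl: "closed K" unfolding K_def by (rule continuous_closed_preimage[OF cont]) auto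
  have ne: "K \<noteq> {}" using T by (auto simp: K_def intro!: exI[of _ 0])
  have bdd: "bdd_above K" unfolding K_def by (rule bdd_aboveI[of _ T]) auto
  define c where "c = Sup K"
  have cK: "c \<in> K" unfolding c_def by (rule closed_contains_Sup[OF ne bdd cl])
  show ?thesis
  proof (cases "c = T")
    case True then show ?thesis using cK by (simp add: K_def)
  next
    case False
    then have c0: "0 \<le> c" "c < T" using cK by (auto simp: K_def)
    from loc[OF c0] obtain b where b: "b > c" "\<And>y. y > c \<Longrightarrow> y < b \<Longrightarrow> g y \<le> g c"
      by (auto simp: eventually_at_right_field)
    define y where "y = min ((c + b)/2) ((c+T)/2)"
    have y: "c < y" "y < b" "y < T" using b c0 unfolding y_def min_def by auto
    have "g y \<le> g c" using b y by auto
    then have "y \<in> K" using cK y c0 by (auto simp: K_def)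
    then have "y \<le> c" unfolding c_def by (rule cSup_upper[OF _ bdd])
    then show ?thesis using y by simp
  qed
qed

lemma shift_sum:
  fixes F G :: "nat \<Rightarrow> real"
  assumes "F 0 = 0"
  shows "(\<Sum>k=1..n. G k * F (k-1)) + G (n+1) * F n = (\<Sum>k=1..n. G (k+1) * F k)"
  by (induction n) (use assms in auto)

lemma key:
  fixes u \<sigma> A :: "nat \<Rightarrow> real"
  assumes su: "\<forall>k\<in>{1..b}. \<sigma> k * u k = \<bar>u k\<bar>" and sb: "\<forall>k\<in>{1..b}. \<bar>\<sigma> k\<bar> \<le> 1"
    and A: "\<forall>k\<in>{1..b}. A k \<ge> 0"
  shows "(\<Sum>k=1..b. \<sigma> k * (A (k-1) * ext0 b u (k-1) - A k * u k - u k + ext0 b u (k+1))) \<le> 0"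
proof -
  define F where "F j = A j * ext0 b u j" for j
  define G where "G = ext0 b \<sigma>"
  have F0: "F 0 = 0" by (simp add: F_def ext0_def)
  have G0: "G 0 = 0" by (simp add: G_def ext0_def)
  have Gb: "\<bar>G j\<bar> \<le> 1" for j using sb by (auto simp: G_def ext0_def)
  have s1: "(\<Sum>k=1..b. \<sigma> k * (A (k-1) * ext0 b u (k-1))) = (\<Sum>k=1..b. G (k+1) * (A k * u k))"
  proof -
    have "(\<Sum>k=1..b. \<sigma> k * (A (k-1) * ext0 b u (k-1))) = (\<Sum>k=1..b. G k * F (k-1))"
      by (rule sum.cong) (auto simp: G_def F_def ext0_def)
    also have "\<dots> = (\<Sum>k=1..b. G (k+1) * F k)" using shift_sum[of F G b, OF F0] by (simp add: G_def ext0_def)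
    also have "\<dots> = (\<Sum>k=1..b. G (k+1) * (A k * u k))" by (rule sum.cong) (auto simp: F_def ext0_def)
    finally show ?thesis .
  qed
  have s2: "(\<Sum>k=1..b. \<sigma> k * ext0 b u (k+1)) = (\<Sum>k=1..b. G (k-1) * u k)"
  proof -
    have "(\<Sum>k=1..b. G (k-1) * u k) = (\<Sum>k=1..b. G (k-1) * ext0 b u k)" by (rule sum.cong) (auto simp: ext0_def)
    also have "\<dots> = (\<Sum>k=1..b. G k * ext0 b u (k+1))" using shift_sum[of G "ext0 b u" b, OF G0]
      by (simp add: ext0_def mult.commute)
    also have "\<dots> = (\<Sum>k=1..b. \<sigma> k * ext0 b u (k+1))" by (rule sum.cong) (auto simp: G_def ext0_def)
    finally show ?thesis by simp
  qed
  have s3: "(\<Sum>k=1..b. \<sigma> k * (A k * u k)) = (\<Sum>k=1..b. A k * \<bar>u k\<bar>)"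
    by (rule sum.cong) (use su in \<open>auto simp: algebra_simps\<close>)
  have s4: "(\<Sum>k=1..b. \<sigma> k * u k) = (\<Sum>k=1..b. \<bar>u k\<bar>)"
    by (rule sum.cong) (use su in auto)
  have "(\<Sum>k=1..b. \<sigma> k * (A (k-1) * ext0 b u (k-1) - A k * u k - u k + ext0 b u (k+1)))
      = (\<Sum>k=1..b. \<sigma> k * (A (k-1) * ext0 b u (k-1))) - (\<Sum>k=1..b. \<sigma> k * (A k * u k))
        - (\<Sum>k=1..b. \<sigma> k * u k) + (\<Sum>k=1..b. \<sigma> k * ext0 b u (k+1))"
    by (simp add: algebra_simps sum.distrib sum_subtractf)
  also have "\<dots> = (\<Sum>k=1..b. A k * (G (k+1) * u k - \<bar>u k\<bar>) + (G (k-1) * u k - \<bar>u k\<bar>))"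
    unfolding s1 s2 s3 s4 by (simp add: algebra_simps sum.distrib sum_subtractf)
  also have "\<dots> \<le> 0"
  proof (rule sum_nonpos)
    fix k assume k: "k \<in> {1..b}"
    have g: "G j * u k \<le> \<bar>u k\<bar>" for j
    proof -
      have "G j * u k \<le> \<bar>G j\<bar> * \<bar>u k\<bar>" by (metis abs_ge_self abs_mult)
      also have "\<dots> \<le> \<bar>u k\<bar>" using Gb[of j] by (simp add: mult_left_le_one_le)
      finally show ?thesis .
    qed
    have "A k * (G (k+1) * u k - \<bar>u k\<bar>) \<le> 0"
      using A k g[of "k+1"] by (simp add: mult_nonneg_nonpos)
    then show "A k * (G (k+1) * u k - \<bar>u k\<bar>) + (G (k-1) * u k - \<bar>u k\<bar>) \<le> 0"
      using g[of "k-1"] by linarith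
  qed
  finally show ?thesis .
qed

theorem lemma19:
  fixes N b :: nat and \<gamma> \<alpha> lam :: real
    and sstar :: "nat \<Rightarrow> real"
    and x x1 :: "real \<Rightarrow> nat \<Rightarrow> real"
    and z y :: "nat \<Rightarrow> real"
  assumes N_pos: "N \<ge> 1"
    and b_pos: "b \<ge> 1"
    and gamma: "0 < \<gamma>" "\<gamma> \<le> 1"
    and alpha: "\<alpha> > 0"
    and lam_def: "lam = 1 - \<gamma> / (real N powr \<alpha>)"
    and sstar_state: "\<forall>k\<in>{1..b}. 0 \<le> sstar k \<and> sstar k \<le> ext_s b sstar (k - 1)"
    and sstar_eq: "\<forall>k\<in>{1..b}. mf_rhs lam b sstar k = 0"
    and x_ode: "\<forall>t\<ge>0. \<forall>k\<in>{1..b}.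
        ((\<lambda>\<tau>. x \<tau> k) has_real_derivative
           mf_rhs lam b (\<lambda>j. x t j + sstar j) k) (at t within {0..})"
    and x_nonneg: "\<forall>t\<ge>0. \<forall>k\<in>{1..b}. x t k + sstar k \<ge> 0"
    and x1_ode: "\<forall>t\<ge>0. \<forall>k\<in>{1..b}.
        ((\<lambda>\<tau>. x1 \<tau> k) has_real_derivative
           2 * lam * (x t (k - 1) + sstar (k - 1)) * ext0 b (x1 t) (k - 1)
           - 2 * lam * (x t k + sstar k) * x1 t k
           - x1 t k + ext0 b (x1 t) (k + 1)) (at t within {0..})"
    and zy: "\<exists>j\<in>{1..b}. (z j - y j = 1 / real N \<or> z j - y j = - 1 / real N)
                 \<and> (\<forall>k\<in>{1..b}. k \<noteq> j \<longrightarrow> z k = y k)"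
    and x1_init: "\<forall>k\<in>{1..b}. x1 0 k = real N * (z k - y k)"
  shows "\<forall>t\<ge>0. (\<Sum>k=1..b. \<bar>x1 t k\<bar>) \<le> (\<Sum>k=1..b. \<bar>x1 0 k\<bar>)
          \<and> (\<Sum>k=1..b. \<bar>x1 0 k\<bar>) = 1"
  proof -
  have P1: "real N powr \<alpha> \<ge> 1" using N_pos alpha by (intro ge_one_powr_ge_zero) auto
  have "\<gamma> / (real N powr \<alpha>) \<le> \<gamma>" using P1 gamma by (simp add: divide_le_eq)
  then have lam0: "lam \<ge> 0" using lam_def gamma by simp
  define V where "V s = (\<Sum>k=1..b. \<bar>x1 s k\<bar>)" for s
  define d where "d t k = 2 * lam * (x t (k - 1) + sstar (k - 1)) * ext0 b (x1 t) (k - 1)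
           - 2 * lam * (x t k + sstar k) * x1 t k - x1 t k + ext0 b (x1 t) (k + 1)" for t k
  define \<sigma> where "\<sigma> t k = (if x1 t k \<noteq> 0 then sgn (x1 t k) else sgn (d t k))" for t k
  have D: "((\<lambda>\<tau>. x1 \<tau> k) has_real_derivative d t k) (at t within {0..})"
    if "t \<ge> 0" "k \<in> {1..b}" for t k using x1_ode that unfolding d_def by blast
  have cont: "continuous_on {0..} (\<lambda>s. x1 s k)" if "k \<in> {1..b}" for k
    by (rule DERIV_continuous_on[OF D]) (use that in auto)
  have contV: "continuous_on {0..T} V" for T
  proof -
    have "continuous_on {0..} V" unfolding V_def
      by (intro continuous_on_sum continuous_on_rabs cont) auto
    then show ?thesis by (rule continuous_on_subset) auto
  qed
  have dneg: "(\<Sum>k=1..b. \<sigma> t k * d t k) \<le> 0" if "t \<ge> 0" for t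
  proof -
    have "(\<Sum>k=1..b. \<sigma> t k * (2 * lam * (x t (k - 1) + sstar (k - 1)) * ext0 b (x1 t) (k - 1)
           - 2 * lam * (x t k + sstar k) * x1 t k - x1 t k + ext0 b (x1 t) (k + 1))) \<le> 0"
      using key[of b "\<sigma> t" "x1 t" "\<lambda>j. 2 * lam * (x t j + sstar j)"] x_nonneg that lam0
      by (auto simp: \<sigma>_def sgn_mult_abs abs_sgn sgn_if)
    then show ?thesis by (simp add: d_def)
  qed
  have mono: "V T \<le> V 0" if T: "T \<ge> 0" for T
  proof (rule ccontr)
    assume "\<not> V T \<le> V 0"
    define \<epsilon> where "\<epsilon> = (V T - V 0) / (T + 1)"
    have \<epsilon>: "\<epsilon> > 0" using \<open>\<not> V T \<le> V 0\<close> T by (simp add: \<epsilon>_def)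
    have "V T - \<epsilon> * T \<le> V 0 - \<epsilon> * 0"
    proof (rule mono_right[where g = "\<lambda>s. V s - \<epsilon> * s"])
      show "continuous_on {0..T} (\<lambda>s. V s - \<epsilon> * s)"
        by (intro continuous_on_diff contV continuous_intros)
      show "0 \<le> T" by (rule T)
      fix t assume t: "0 \<le> t" "t < T"
      have eb: "\<epsilon> / real b > 0" using \<epsilon> b_pos by simp
      have ev: "\<forall>k\<in>{1..b}. eventually (\<lambda>s. \<bar>x1 s k\<bar> - \<bar>x1 t k\<bar>
               \<le> \<sigma> t k * d t k * (s - t) + \<epsilon> / real b * (s - t)) (at_right t)"
        using local_abs[OF D[OF t(1)] t(1) eb] by (simp add: \<sigma>_def)
      have ev2: "eventually (\<lambda>s. \<forall>k\<in>{1..b}. \<bar>x1 s k\<bar> - \<bar>x1 t k\<bar>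
               \<le> \<sigma> t k * d t k * (s - t) + \<epsilon> / real b * (s - t)) (at_right t)"
        by (rule eventually_ball_finite) (use ev in auto)
      show "eventually (\<lambda>s. V s - \<epsilon> * s \<le> V t - \<epsilon> * t) (at_right t)"
        using eventually_conj[OF eventually_at_right_less[of t] ev2]
      proof (rule eventually_mono)
        fix s assume s: "t < s \<and> (\<forall>k\<in>{1..b}. \<bar>x1 s k\<bar> - \<bar>x1 t k\<bar>
               \<le> \<sigma> t k * d t k * (s - t) + \<epsilon> / real b * (s - t))"
        have "V s - V t = (\<Sum>k=1..b. \<bar>x1 s k\<bar> - \<bar>x1 t k\<bar>)"
          by (simp add: V_def sum_subtractf)
        also have "\<dots> \<le> (\<Sum>k=1..b. \<sigma> t k * d t k * (s - t) + \<epsilon> / real b * (s - t))"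
          by (rule sum_mono) (use s in auto)
        also have "\<dots> = (\<Sum>k=1..b. \<sigma> t k * d t k) * (s - t) + \<epsilon> * (s - t)"
          using b_pos by (simp add: sum.distrib sum_distrib_right)
        also have "\<dots> \<le> \<epsilon> * (s - t)"
          using dneg[OF t(1)] s by (simp add: mult_nonpos_nonneg)
        finally show "V s - \<epsilon> * s \<le> V t - \<epsilon> * t" by (simp add: algebra_simps)
      qed
    qed
    then have "V T - V 0 \<le> \<epsilon> * T" by simp
    also have "\<dots> < \<epsilon> * (T + 1)" using \<epsilon> by simp
    also have "\<dots> = V T - V 0" using T by (simp add: \<epsilon>_def)
    finally show False by simp
  qed
  have one: "(\<Sum>k=1..b. \<bar>x1 0 k\<bar>) = 1"
  proof -
    obtain j where j: "j \<in> {1..b}" "z j - y j = 1 / real N \<or> z j - y j = - 1 / real N"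
      "\<forall>k\<in>{1..b}. k \<noteq> j \<longrightarrow> z k = y k" using zy by blast
    have "(\<Sum>k=1..b. \<bar>x1 0 k\<bar>) = (\<Sum>k=1..b. if k = j then 1 else 0)"
    proof (rule sum.cong)
      fix k assume k: "k \<in> {1..b}"
      show "\<bar>x1 0 k\<bar> = (if k = j then 1 else 0)"
        using x1_init k j N_pos by auto
    qed simp
    also have "\<dots> = 1" using j(1) by simp
    finally show ?thesis .
  qed
  show ?thesis using mono one unfolding V_def by blast
qed

end
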